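(* Let $(M,\Delta,S,\varepsilon)$ be a weak Kac algebra. Then $(M,\Delta,S)$ is a generalized counital $C^*$-bialgebra, i.e. the map $\varepsilon_t=\mu(\mathrm{id}\otimes S)\Delta$ satisfies: (1) $\varepsilon_t(1)=1$; (2) $\varepsilon_t(M)\subset N_t$; (3) $(\mathrm{id}\otimes\varepsilon_t)\Delta(x)=e(x\otimes 1)$ for all $x\in N_s$.
   Context: All algebras are finite-dimensional over $\mathbb{C}$; $\varsigma$ denotes the flip $x\otimes y\mapsto y\otimes x$ and $\mu(x\otimes y)=xy$. A weak Kac algebra is a quadruple $(M,\Delta,S,\varepsilon)$ where $M$ is a finite-dimensional $C^*$-algebra; $\Delta:M\to M\otimes M$ is an injective, not necessarily unital, $*$-homomorphism with $(\Delta\otimes\mathrm{id})\Delta=(\mathrm{id}\otimes\Delta)\Delta$; $S:M\to M$ is a linear, unital, antimultiplicative, $*$-preserving bijection with $S^2=\mathrm{id}$ and $(S\otimes S)\circ\Delta=\varsigma\circ\Delta\circ S$; and $\varepsilon:M\to\mathbb{C}$ is linear with $(\varepsilon\otimes\mathrm{id})\Delta=(\mathrm{id}\otimes\varepsilon)\Delta=\mathrm{id}$, $\varepsilon\circ S=\varepsilon$, $\varepsilon(x^* )=\overline{\varepsilon(x)}$, $(\varepsilon\otimes\varepsilon)((x\otimes1)e(1\otimes y))=\varepsilon(xy)$ for all $x,y$, where $e:=\Delta(1)$, and $(\varepsilon_s\otimes\mathrm{id})\Delta(x)=(1\otimes x)e$ for all $x$, where $\varepsilon_s:=\mu(S\otimes\mathrm{id})\Delta$.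 The target and source Cartan subalgebras are $N_t=\{x\in M:\Delta(x)=e(x\otimes 1)=(x\otimes1)e\}$ and $N_s=\{x\in M:\Delta(x)=e(1\otimes x)=(1\otimes x)e\}$. *)

theory Defs
  imports "HOL-Analysis.Analysis"
begin

text \<open>Finite-dimensional C*-algebras are realised concretely as unital *-subalgebras
of the full matrix algebra of complex 'n x 'n matrices ('n a finite index type);
the algebraic tensor product M (x) M is realised inside the matrices indexed by 'n x 'n
via Kronecker products.\<close>

type_synonym 'n cmat = "complex^'n^'n"

definition csmul :: "complex \<Rightarrow> complex^'n^'m \<Rightarrow> complex^'n^'m" where
  "csmul c A = (\<chi> i j. c * A$i$j)"

definition adjm :: "complex^('n::finite)^'n \<Rightarrow> complex^'n^'n" where
  "adjm A = (\<chi> i j. cnj (A$j$i))"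

text \<open>Kronecker (tensor) product of matrices.\<close>
definition tens :: "complex^('a::finite)^'a \<Rightarrow> complex^('b::finite)^'b \<Rightarrow> complex^('a\<times>'b)^('a\<times>'b)" where
  "tens A B = (\<chi> p q. A$(fst p)$(fst q) * B$(snd p)$(snd q))"

text \<open>M is a finite-dimensional C*-algebra: a unital *-subalgebra of the matrices.\<close>
definition cstar_subalg :: "('n::finite) cmat set \<Rightarrow> bool" where
  "cstar_subalg M \<longleftrightarrow> mat 1 \<in> M \<and> 0 \<in> M
     \<and> (\<forall>x\<in>M. \<forall>y\<in>M. x + y \<in> M \<and> x ** y \<in> M)
     \<and> (\<forall>c. \<forall>x\<in>M. csmul c x \<in> M) \<and> (\<forall>x\<in>M. adjm x \<in> M)"

text \<open>The algebraic tensor product M (x) M.\<close>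
definition tsp :: "('n::finite) cmat set \<Rightarrow> ('n\<times>'n) cmat set" where
  "tsp M = {(\<Sum>k<m. tens (a k) (b k)) | (m::nat) a b. \<forall>k<m. a k \<in> M \<and> b k \<in> M}"

text \<open>Application of the linear map (f (x) g) followed by the bilinear "combination" c
to an element of M (x) M: for X = sum_k a_k (x) b_k it is sum_k c (f a_k) (g b_k).
(Well defined whenever f, g are linear on M and c is bilinear.)\<close>
definition tmap :: "('n::finite) cmat set \<Rightarrow> ('x \<Rightarrow> 'y \<Rightarrow> 'z::comm_monoid_add)
     \<Rightarrow> ('n cmat \<Rightarrow> 'x) \<Rightarrow> ('n cmat \<Rightarrow> 'y) \<Rightarrow> ('n\<times>'n) cmat \<Rightarrow> 'z" where
  "tmap M c f g X = (THE Y. \<exists>(m::nat) a b. (\<forall>k<m. a k \<in> M \<and> b k \<in> M)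
      \<and> X = (\<Sum>k<m. tens (a k) (b k)) \<and> Y = (\<Sum>k<m. c (f (a k)) (g (b k))))"

text \<open>The flip x (x) y \<mapsto> y (x) x.\<close>
definition flip :: "(('n::finite)\<times>'n) cmat \<Rightarrow> ('n\<times>'n) cmat" where
  "flip X = (\<chi> p q. X$(snd p, fst p)$(snd q, fst q))"

text \<open>Reassociation (M(x)M)(x)M \<rightarrow> M(x)(M(x)M).\<close>
definition reassoc :: "((('n::finite)\<times>'n)\<times>'n) cmat \<Rightarrow> ('n\<times>('n\<times>'n)) cmat" where
  "reassoc X = (\<chi> p q. X$((fst p, fst (snd p)), snd (snd p))$((fst q, fst (snd q)), snd (snd q)))"

definition Nt :: "('n::finite) cmat set \<Rightarrow> ('n cmat \<Rightarrow> ('n\<times>'n) cmat) \<Rightarrow> 'n cmat set" where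
  "Nt M \<Delta> = {x\<in>M. \<Delta> x = \<Delta> (mat 1) ** tens x (mat 1) \<and> \<Delta> x = tens x (mat 1) ** \<Delta> (mat 1)}"

definition Ns :: "('n::finite) cmat set \<Rightarrow> ('n cmat \<Rightarrow> ('n\<times>'n) cmat) \<Rightarrow> 'n cmat set" where
  "Ns M \<Delta> = {x\<in>M. \<Delta> x = \<Delta> (mat 1) ** tens (mat 1) x \<and> \<Delta> x = tens (mat 1) x ** \<Delta> (mat 1)}"

text \<open>epsilon_s = mu (S (x) id) Delta and epsilon_t = mu (id (x) S) Delta.\<close>
definition eps_s :: "('n::finite) cmat set \<Rightarrow> ('n cmat \<Rightarrow> ('n\<times>'n) cmat) \<Rightarrow> ('n cmat \<Rightarrow> 'n cmat) \<Rightarrow> 'n cmat \<Rightarrow> 'n cmat" where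
  "eps_s M \<Delta> S x = tmap M (**) S id (\<Delta> x)"

definition eps_t :: "('n::finite) cmat set \<Rightarrow> ('n cmat \<Rightarrow> ('n\<times>'n) cmat) \<Rightarrow> ('n cmat \<Rightarrow> 'n cmat) \<Rightarrow> 'n cmat \<Rightarrow> 'n cmat" where
  "eps_t M \<Delta> S x = tmap M (**) id S (\<Delta> x)"

definition weak_kac :: "('n::finite) cmat set \<Rightarrow> ('n cmat \<Rightarrow> ('n\<times>'n) cmat) \<Rightarrow> ('n cmat \<Rightarrow> 'n cmat)
    \<Rightarrow> ('n cmat \<Rightarrow> complex) \<Rightarrow> bool" where
  "weak_kac M \<Delta> S \<epsilon> \<longleftrightarrow>
     cstar_subalg M
     \<comment> \<open>Delta: injective, not necessarily unital *-homomorphism M -> M (x) M, coassociative\<close>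
     \<and> (\<forall>x\<in>M. \<Delta> x \<in> tsp M) \<and> inj_on \<Delta> M
     \<and> (\<forall>x\<in>M. \<forall>y\<in>M. \<Delta> (x + y) = \<Delta> x + \<Delta> y \<and> \<Delta> (x ** y) = \<Delta> x ** \<Delta> y)
     \<and> (\<forall>c. \<forall>x\<in>M. \<Delta> (csmul c x) = csmul c (\<Delta> x))
     \<and> (\<forall>x\<in>M. \<Delta> (adjm x) = adjm (\<Delta> x))
     \<and> (\<forall>x\<in>M. reassoc (tmap M tens \<Delta> id (\<Delta> x)) = tmap M tens id \<Delta> (\<Delta> x))
     \<comment> \<open>S: linear, unital, antimultiplicative, *-preserving involutive bijection\<close>
     \<and> bij_betw S M M
     \<and> (\<forall>x\<in>M. \<forall>y\<in>M. S (x + y) = S x + S y \<and> S (x ** y) = S y ** S x)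
     \<and> (\<forall>c. \<forall>x\<in>M. S (csmul c x) = csmul c (S x))
     \<and> S (mat 1) = mat 1
     \<and> (\<forall>x\<in>M. S (adjm x) = adjm (S x))
     \<and> (\<forall>x\<in>M. S (S x) = x)
     \<and> (\<forall>x\<in>M. tmap M tens S S (\<Delta> x) = flip (\<Delta> (S x)))
     \<comment> \<open>epsilon: linear counit\<close>
     \<and> (\<forall>x\<in>M. \<forall>y\<in>M. \<epsilon> (x + y) = \<epsilon> x + \<epsilon> y)
     \<and> (\<forall>c. \<forall>x\<in>M. \<epsilon> (csmul c x) = c * \<epsilon> x)
     \<and> (\<forall>x\<in>M. tmap M csmul \<epsilon> id (\<Delta> x) = x)
     \<and> (\<forall>x\<in>M. tmap M (\<lambda>y c. csmul c y) id \<epsilon> (\<Delta> x) = x)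
     \<and> (\<forall>x\<in>M. \<epsilon> (S x) = \<epsilon> x)
     \<and> (\<forall>x\<in>M. \<epsilon> (adjm x) = cnj (\<epsilon> x))
     \<and> (\<forall>x\<in>M. \<forall>y\<in>M. tmap M (*) \<epsilon> \<epsilon> (tens x (mat 1) ** \<Delta> (mat 1) ** tens (mat 1) y)
            = \<epsilon> (x ** y))
     \<and> (\<forall>x\<in>M. tmap M tens (eps_s M \<Delta> S) id (\<Delta> x) = tens (mat 1) x ** \<Delta> (mat 1))"

end

theory Submission
  imports Defs
begin



lemma cmat_eqI: "(\<And>i j. A$i$j = B$i$j) \<Longrightarrow> A = B" by (simp add: vec_eq_iff)
lemma csmul_ent[simp]: "csmul c A $ i $ j = c * A $ i $ j" by (simp add: csmul_def)
lemma tens_ent: "tens A B $ p $ q = A$(fst p)$(fst q) * B$(snd p)$(snd q)" by (simp add: tens_def)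
lemma adjm_ent[simp]: "adjm A $ i $ j = cnj (A$j$i)" by (simp add: adjm_def)
lemma flip_ent: "flip X $ p $ q = X$(snd p, fst p)$(snd q, fst q)" by (simp add: flip_def)
lemma reassoc_ent: "reassoc X $ p $ q = X$((fst p, fst (snd p)), snd (snd p))$((fst q, fst (snd q)), snd (snd q))"
  by (simp add: reassoc_def)

lemma tens_add_left: "tens (A + A') B = tens A B + tens A' B"
  by (rule cmat_eqI) (simp add: tens_ent algebra_simps)
lemma tens_add_right: "tens A (B + B') = tens A B + tens A B'"
  by (rule cmat_eqI) (simp add: tens_ent algebra_simps)
lemma tens_csmul_left: "tens (csmul c A) B = csmul c (tens A B)"
  by (rule cmat_eqI) (simp add: tens_ent algebra_simps)
lemma tens_csmul_right: "tens A (csmul c B) = csmul c (tens A B)"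
  by (rule cmat_eqI) (simp add: tens_ent algebra_simps)
lemma tens_sum_left: "tens (\<Sum>i\<in>I. A i) B = (\<Sum>i\<in>I. tens (A i) B)"
  by (rule cmat_eqI) (simp add: tens_ent sum_distrib_right)
lemma tens_sum_right: "tens A (\<Sum>i\<in>I. B i) = (\<Sum>i\<in>I. tens A (B i))"
  by (rule cmat_eqI) (simp add: tens_ent sum_distrib_left)
lemma tens_zero_left[simp]: "tens 0 B = 0"
  by (rule cmat_eqI) (simp add: tens_ent)
lemma tens_zero_right[simp]: "tens A 0 = 0"
  by (rule cmat_eqI) (simp add: tens_ent)
lemma csmul_add: "csmul c (A + B) = csmul c A + csmul c B"
  by (rule cmat_eqI) (simp add: algebra_simps)
lemma csmul_sum: "csmul c (\<Sum>i\<in>I. A i) = (\<Sum>i\<in>I. csmul c (A i))"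
  by (rule cmat_eqI) (simp add: sum_distrib_left)
lemma csmul_csmul: "csmul c (csmul d A) = csmul (c*d) A"
  by (rule cmat_eqI) simp
lemma csmul_one[simp]: "csmul 1 A = A"
  by (rule cmat_eqI) simp
lemma csmul_zero[simp]: "csmul c 0 = 0"
  by (rule cmat_eqI) simp
lemma csmul_minus1: "csmul (-1) A = - A"
  by (rule cmat_eqI) simp
lemma csmul_plus: "csmul (c + d) A = csmul c A + csmul d A"
  by (rule cmat_eqI) (simp add: algebra_simps)
lemma mult_csmul_left: "csmul c A ** B = csmul c (A ** B)"
  by (rule cmat_eqI) (simp add: matrix_matrix_mult_def sum_distrib_left algebra_simps)
lemma mult_csmul_right: "A ** csmul c B = csmul c (A ** B)"
  by (rule cmat_eqI) (simp add: matrix_matrix_mult_def sum_distrib_left algebra_simps)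
lemma tens_one: "tens (mat 1) (mat 1) = mat 1"
  by (rule cmat_eqI) (auto simp: tens_ent mat_def prod_eq_iff)

lemma adjm_tens: "adjm (tens A B) = tens (adjm A) (adjm B)"
  by (rule cmat_eqI) (simp add: tens_ent)
lemma adjm_sum: "adjm (\<Sum>i\<in>I. A i) = (\<Sum>i\<in>I. adjm (A i))"
  by (rule cmat_eqI) simp
lemma adjm_mult: "adjm (A ** B) = adjm B ** adjm A"
  by (rule cmat_eqI) (simp add: matrix_matrix_mult_def mult.commute)
lemma adjm_one: "adjm (mat 1) = mat 1"
  by (rule cmat_eqI) (simp add: mat_def)
lemma flip_tens: "flip (tens A B) = tens B A"
  by (rule cmat_eqI) (simp add: flip_ent tens_ent)
lemma flip_flip: "flip (flip X) = X"
  by (rule cmat_eqI) (simp add: flip_ent)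
lemma flip_sum: "flip (\<Sum>i\<in>I. A i) = (\<Sum>i\<in>I. flip (A i))"
  by (rule cmat_eqI) (simp add: flip_ent)
lemma reassoc_tens: "reassoc (tens (tens A B) C) = tens A (tens B C)"
  by (rule cmat_eqI) (simp add: reassoc_ent tens_ent)
lemma reassoc_sum: "reassoc (\<Sum>i\<in>I. A i) = (\<Sum>i\<in>I. reassoc (A i))"
  by (rule cmat_eqI) (simp add: reassoc_ent)


lemma mult_sum_left: "(\<Sum>i\<in>I. A i) ** (B::complex^_^_) = (\<Sum>i\<in>I. A i ** B)"
  apply (rule cmat_eqI) apply (simp add: matrix_matrix_mult_def sum_distrib_right)
  by (rule sum.swap)
lemma mult_sum_right: "(B::complex^_^_) ** (\<Sum>i\<in>I. A i) = (\<Sum>i\<in>I. B ** A i)"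
  apply (rule cmat_eqI) apply (simp add: matrix_matrix_mult_def sum_distrib_left)
  by (rule sum.swap)
lemma sum_pair_UNIV: "(\<Sum>r\<in>(UNIV::('a::finite\<times>'b::finite) set). f r) = (\<Sum>k\<in>UNIV. \<Sum>l\<in>UNIV. f (k,l))"
proof -
  have "(\<Sum>r\<in>(UNIV::('a\<times>'b) set). f r) = (\<Sum>r\<in>(UNIV\<times>UNIV). f r)" by simp
  also have "\<dots> = (\<Sum>(k,l)\<in>(UNIV\<times>UNIV). f (k,l))" by simp
  also have "\<dots> = (\<Sum>k\<in>UNIV. \<Sum>l\<in>UNIV. f (k,l))" by (rule sum.cartesian_product[symmetric])
  finally show ?thesis .
qed
lemma tens_mult: "tens A B ** tens C D = tens (A ** C) (B ** (D::complex^_^_))"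
  apply (rule cmat_eqI)
  apply (simp only: matrix_matrix_mult_def tens_ent vec_lambda_beta sum_pair_UNIV sum_product fst_conv snd_conv)
  apply (intro sum.cong refl)
  apply (simp add: algebra_simps)
  done


definition subsp :: "('a::finite) cmat set \<Rightarrow> bool" where
  "subsp S \<longleftrightarrow> 0 \<in> S \<and> (\<forall>x\<in>S. \<forall>y\<in>S. x + y \<in> S) \<and> (\<forall>c. \<forall>x\<in>S. csmul c x \<in> S)"

lemma subsp_0: "subsp S \<Longrightarrow> 0 \<in> S" by (simp add: subsp_def)
lemma subsp_add: "subsp S \<Longrightarrow> x \<in> S \<Longrightarrow> y \<in> S \<Longrightarrow> x + y \<in> S" by (simp add: subsp_def)
lemma subsp_csmul: "subsp S \<Longrightarrow> x \<in> S \<Longrightarrow> csmul c x \<in> S" by (simp add: subsp_def)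
lemma subsp_uminus: "subsp S \<Longrightarrow> x \<in> S \<Longrightarrow> - x \<in> S"
  by (metis csmul_minus1 subsp_csmul)
lemma subsp_sum: assumes "subsp S" "finite I" "\<And>i. i \<in> I \<Longrightarrow> x i \<in> S" shows "(\<Sum>i\<in>I. x i) \<in> S"
  using assms(2,3) by (induction I rule: finite_induct) (auto intro: subsp_0[OF assms(1)] subsp_add[OF assms(1)])
lemma tens_uminus_left: "tens (- A) B = - tens A B"
  by (rule cmat_eqI) (simp add: tens_ent)
lemma csmul_0_left[simp]: "csmul 0 A = 0"
  by (rule cmat_eqI) simp
lemma subsp_UNIV: "subsp UNIV" by (simp add: subsp_def)

locale bil =
  fixes M :: "('a::finite) cmat set" and N :: "('b::finite) cmat set"
    and B :: "'a cmat \<Rightarrow> 'b cmat \<Rightarrow> 'z::ab_group_add"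
  assumes sM: "subsp M" and sN: "subsp N"
   and aL: "\<And>x x' y. x\<in>M \<Longrightarrow> x'\<in>M \<Longrightarrow> y\<in>N \<Longrightarrow> B (x+x') y = B x y + B x' y"
   and aR: "\<And>x y y'. x\<in>M \<Longrightarrow> y\<in>N \<Longrightarrow> y'\<in>N \<Longrightarrow> B x (y+y') = B x y + B x y'"
   and bal: "\<And>c x y. x\<in>M \<Longrightarrow> y\<in>N \<Longrightarrow> B (csmul c x) y = B x (csmul c y)"
begin

lemma B0L: "y \<in> N \<Longrightarrow> B 0 y = 0"
  using aL[of 0 0 y] subsp_0[OF sM] by simp
lemma B0R: "x \<in> M \<Longrightarrow> B x 0 = 0"
  using aR[of x 0 0] subsp_0[OF sN] by simp
lemma BsumL: "finite I \<Longrightarrow> (\<And>i. i\<in>I \<Longrightarrow> x i \<in> M) \<Longrightarrow> y \<in> N \<Longrightarrow> B (\<Sum>i\<in>I. x i) y = (\<Sum>i\<in>I. B (x i) y)"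
proof (induction I rule: finite_induct)
  case empty then show ?case using B0L by simp
next
  case (insert j I)
  have "B (\<Sum>i\<in>insert j I. x i) y = B (x j + (\<Sum>i\<in>I. x i)) y" using insert by simp
  also have "\<dots> = B (x j) y + B (\<Sum>i\<in>I. x i) y"
    using insert by (intro aL) (auto intro!: subsp_sum[OF sM])
  finally show ?case using insert by simp
qed
lemma BuminusL: "x \<in> M \<Longrightarrow> y \<in> N \<Longrightarrow> B (- x) y = - B x y"
  using aL[of "-x" x y] B0L[of y] subsp_uminus[OF sM] by (simp add: eq_neg_iff_add_eq_0)

lemma core0:
  "finite I \<Longrightarrow> (\<forall>i\<in>I. a i \<in> M \<and> b i \<in> N) \<Longrightarrow> (\<Sum>i\<in>I. tens (a i) (b i)) = 0
   \<Longrightarrow> (\<Sum>i\<in>I. B (a i) (b i)) = 0"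
proof (induction "card I" arbitrary: I b rule: less_induct)
  case less
  note fin = less.prems(1) and mem = less.prems(2) and zer = less.prems(3)
  show ?case
  proof (cases "\<exists>k\<in>I. b k \<noteq> 0")
    case False
    then have "\<forall>i\<in>I. B (a i) (b i) = 0" using B0R mem by auto
    then show ?thesis by simp
  next
    case True
    then obtain k where kI: "k\<in>I" and bk: "b k \<noteq> 0" by blast
    then obtain s t where bst: "b k $ s $ t \<noteq> 0" by (metis cmat_eqI zero_index)
    define \<beta> where "\<beta> = b k $ s $ t"
    define \<mu> where "\<mu> i = b i $ s $ t / \<beta>" for i
    define I' where "I' = I - {k}"
    define b' where "b' i = b i + csmul (- \<mu> i) (b k)" for i
    have fin': "finite I'" using fin by (simp add: I'_def)
    have card': "card I' < card I" unfolding I'_def by (rule card_Diff1_less[OF fin kI])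
    have mem': "\<forall>i\<in>I'. a i \<in> M \<and> b' i \<in> N"
      using mem kI by (auto simp: I'_def b'_def intro!: subsp_add[OF sN] subsp_csmul[OF sN])
    have splitI: "(\<Sum>i\<in>I. f i) = f k + (\<Sum>i\<in>I'. f i)" for f :: "_ \<Rightarrow> 'w::comm_monoid_add"
      using sum.remove[OF fin kI] by (simp add: I'_def)
    have ak: "a k = (\<Sum>i\<in>I'. csmul (- \<mu> i) (a i))"
    proof (rule cmat_eqI)
      fix x y
      have "(\<Sum>i\<in>I. tens (a i) (b i)) $ (x,s) $ (y,t) = 0" using zer by simp
      hence "(\<Sum>i\<in>I. a i $x$y * b i $s$t) = 0" by (simp add: tens_ent)
      hence "a k$x$y * \<beta> + (\<Sum>i\<in>I'. a i$x$y * b i$s$t) = 0" using splitI[of "\<lambda>i. a i $x$y * b i $s$t"] \<beta>_def by simp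
      hence "a k$x$y = - (\<Sum>i\<in>I'. a i$x$y * b i$s$t) / \<beta>" using bst \<beta>_def
        by (simp add: field_simps eq_neg_iff_add_eq_0)
      also have "\<dots> = (\<Sum>i\<in>I'. - \<mu> i * a i$x$y)"
        by (simp add: \<mu>_def sum_divide_distrib sum_negf[symmetric] algebra_simps)
      finally show "a k $ x $ y = (\<Sum>i\<in>I'. csmul (- \<mu> i) (a i)) $ x $ y" by simp
    qed
    have zero': "(\<Sum>i\<in>I'. tens (a i) (b' i)) = 0"
    proof -
      have "(\<Sum>i\<in>I'. tens (a i) (b' i)) = (\<Sum>i\<in>I'. tens (a i) (b i)) + (\<Sum>i\<in>I'. tens (csmul (- \<mu> i) (a i)) (b k))"
        by (simp add: b'_def tens_add_right tens_csmul_right tens_csmul_left sum.distrib)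
      also have "(\<Sum>i\<in>I'. tens (csmul (- \<mu> i) (a i)) (b k)) = tens (a k) (b k)"
        by (simp add: ak tens_sum_left)
      finally show ?thesis using zer splitI[of "\<lambda>i. tens (a i) (b i)"] by (simp add: add.commute)
    qed
    have IH: "(\<Sum>i\<in>I'. B (a i) (b' i)) = 0"
      using less.hyps[OF card' fin' mem' zero'] .
    have "(\<Sum>i\<in>I'. B (a i) (b' i)) = (\<Sum>i\<in>I'. B (a i) (b i)) + (\<Sum>i\<in>I'. B (csmul (- \<mu> i) (a i)) (b k))"
      unfolding sum.distrib[symmetric]
    proof (rule sum.cong[OF refl])
      fix i assume i: "i \<in> I'"
      then have "a i \<in> M" "b i \<in> N" "b k \<in> N" using mem kI by (auto simp: I'_def)
      then show "B (a i) (b' i) = B (a i) (b i) + B (csmul (- \<mu> i) (a i)) (b k)"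
        by (simp add: b'_def aR subsp_csmul[OF sN] bal)
    qed
    also have "(\<Sum>i\<in>I'. B (csmul (- \<mu> i) (a i)) (b k)) = B (a k) (b k)"
      unfolding ak using mem kI fin'
      by (subst BsumL) (auto simp: I'_def intro: subsp_csmul[OF sM])
    finally have "(\<Sum>i\<in>I'. B (a i) (b i)) + B (a k) (b k) = 0" using IH by simp
    then show ?thesis using splitI[of "\<lambda>i. B (a i) (b i)"] by (simp add: add.commute)
  qed
qed

lemma core_eq:
  assumes "finite I" "\<forall>i\<in>I. a i \<in> M \<and> b i \<in> N" "finite J" "\<forall>j\<in>J. a' j \<in> M \<and> b' j \<in> N"
    and "(\<Sum>i\<in>I. tens (a i) (b i)) = (\<Sum>j\<in>J. tens (a' j) (b' j))"
  shows "(\<Sum>i\<in>I. B (a i) (b i)) = (\<Sum>j\<in>J. B (a' j) (b' j))"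
proof -
  define A where "A x = (case x of Inl i \<Rightarrow> a i | Inr j \<Rightarrow> - a' j)" for x
  define C where "C x = (case x of Inl i \<Rightarrow> b i | Inr j \<Rightarrow> b' j)" for x
  have fin: "finite (I <+> J)" using assms by simp
  have mem: "\<forall>x\<in>I <+> J. A x \<in> M \<and> C x \<in> N"
    using assms by (auto simp: A_def C_def intro!: subsp_uminus[OF sM])
  have "(\<Sum>x\<in>I <+> J. tens (A x) (C x)) = (\<Sum>i\<in>I. tens (a i) (b i)) - (\<Sum>j\<in>J. tens (a' j) (b' j))"
    using assms by (simp add: sum.Plus A_def C_def o_def tens_uminus_left sum_negf)
  also have "\<dots> = 0" using assms(5) by simp
  finally have "(\<Sum>x\<in>I <+> J. B (A x) (C x)) = 0" using core0[OF fin mem] by blast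
  moreover have "(\<Sum>x\<in>I <+> J. B (A x) (C x)) = (\<Sum>i\<in>I. B (a i) (b i)) - (\<Sum>j\<in>J. B (a' j) (b' j))"
    using assms by (simp add: sum.Plus A_def C_def o_def BuminusL sum_negf)
  ultimately show ?thesis by simp
qed
end


lemma matrix_add_rdistrib': "((A::complex^_^_) + B) ** C = A ** C + B ** C"
  by (rule cmat_eqI) (simp add: matrix_matrix_mult_def distrib_right sum.distrib)

definition lin :: "('a::finite) cmat set \<Rightarrow> ('a cmat \<Rightarrow> complex^('p::finite)^('q::finite)) \<Rightarrow> bool" where
  "lin M f \<longleftrightarrow> (\<forall>x\<in>M. \<forall>y\<in>M. f (x + y) = f x + f y) \<and> (\<forall>c. \<forall>x\<in>M. f (csmul c x) = csmul c (f x))"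

definition slin :: "('a::finite) cmat set \<Rightarrow> ('a cmat \<Rightarrow> complex) \<Rightarrow> bool" where
  "slin M f \<longleftrightarrow> (\<forall>x\<in>M. \<forall>y\<in>M. f (x + y) = f x + f y) \<and> (\<forall>c. \<forall>x\<in>M. f (csmul c x) = c * f x)"

lemma linD: "lin M f \<Longrightarrow> x\<in>M \<Longrightarrow> y\<in>M \<Longrightarrow> f (x + y) = f x + f y"
  "lin M f \<Longrightarrow> x\<in>M \<Longrightarrow> f (csmul c x) = csmul c (f x)" by (auto simp: lin_def)
lemma slinD: "slin M f \<Longrightarrow> x\<in>M \<Longrightarrow> y\<in>M \<Longrightarrow> f (x + y) = f x + f y"
  "slin M f \<Longrightarrow> x\<in>M \<Longrightarrow> f (csmul c x) = c * f x" by (auto simp: slin_def)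

lemma lin_id: "lin M id" by (simp add: lin_def)
lemma lin_id': "lin M (\<lambda>x. x)" by (simp add: lin_def)

lemma lin_sum: assumes "lin M f" "subsp M" "finite I" "\<And>i. i\<in>I \<Longrightarrow> x i \<in> M"
  shows "f (\<Sum>i\<in>I. x i) = (\<Sum>i\<in>I. f (x i))"
  using assms(3,4)
proof (induction I rule: finite_induct)
  case empty
  have "f 0 = f (csmul 0 0)" by simp
  also have "\<dots> = 0" using linD(2)[OF assms(1) subsp_0[OF assms(2)], of 0] by (simp add: cmat_eqI)
  finally show ?case by simp
next
  case (insert j I)
  have "sum x I \<in> M" by (rule subsp_sum[OF assms(2)]) (use insert in auto)
  then show ?case using linD(1)[OF assms(1)] insert by simp
qed

lemma lin_lincomb: assumes "lin M f" "subsp M" "finite I" "\<And>i. i\<in>I \<Longrightarrow> x i \<in> M"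
  shows "f (\<Sum>i\<in>I. csmul (c i) (x i)) = (\<Sum>i\<in>I. csmul (c i) (f (x i)))"
  using lin_sum[OF assms(1,2,3), of "\<lambda>i. csmul (c i) (x i)"] assms linD(2)[OF assms(1)] subsp_csmul[OF assms(2)]
  by simp

lemma bil_tens: "subsp M \<Longrightarrow> subsp N \<Longrightarrow> lin M f \<Longrightarrow> lin N g \<Longrightarrow> bil M N (\<lambda>x y. tens (f x) (g y))"
  by (unfold_locales) (auto simp: lin_def tens_add_left tens_add_right tens_csmul_left tens_csmul_right)

lemma bil_mult: "subsp M \<Longrightarrow> subsp N \<Longrightarrow> lin M f \<Longrightarrow> lin N g \<Longrightarrow> bil M N (\<lambda>x y. f x ** g y)"
  by (unfold_locales) (auto simp: lin_def matrix_add_ldistrib matrix_add_rdistrib' mult_csmul_left mult_csmul_right)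

lemma bil_csmul: "subsp M \<Longrightarrow> subsp N \<Longrightarrow> slin M f \<Longrightarrow> lin N g \<Longrightarrow> bil M N (\<lambda>x y. csmul (f x) (g y))"
  by (unfold_locales) (auto simp: lin_def slin_def csmul_add csmul_plus csmul_csmul mult.commute)

lemma bil_tens_swap: "subsp M \<Longrightarrow> lin M f \<Longrightarrow> bil M M (\<lambda>x y. tens (f y) (f x))"
  by (unfold_locales) (auto simp: lin_def tens_add_left tens_add_right tens_csmul_left tens_csmul_right)

lemma tsp_I: assumes "finite I" "\<forall>i\<in>I. a i \<in> M \<and> b i \<in> M"
  shows "(\<Sum>i\<in>I. tens (a i) (b i)) \<in> tsp M"
proof -
  obtain h where h: "bij_betw h {0..<card I} I" using ex_bij_betw_nat_finite[OF assms(1)] by blast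
  have "(\<Sum>i\<in>I. tens (a i) (b i)) = (\<Sum>k<card I. tens (a (h k)) (b (h k)))"
    using sum.reindex_bij_betw[OF h, of "\<lambda>i. tens (a i) (b i)"] by (simp add: atLeast0LessThan)
  moreover have "\<forall>k<card I. a (h k) \<in> M \<and> b (h k) \<in> M"
    using h assms(2) by (auto simp: bij_betw_def)
  ultimately show ?thesis unfolding tsp_def mem_Collect_eq
    by (intro exI[of _ "card I"] exI[of _ "\<lambda>k. a (h k)"] exI[of _ "\<lambda>k. b (h k)"]) auto
qed

lemma tsp_E: assumes "X \<in> tsp M"
  obtains m :: nat and a b where "\<forall>k<m. a k \<in> M \<and> b k \<in> M" "X = (\<Sum>k<m. tens (a k) (b k))"
  using assms unfolding tsp_def mem_Collect_eq by blast

lemma tmap_eq: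
  fixes c :: "'x \<Rightarrow> 'y \<Rightarrow> 'z::ab_group_add"
  assumes bl: "bil M M (\<lambda>x y. c (f x) (g y))" and fin: "finite I" and mem: "\<forall>i\<in>I. a i \<in> M \<and> b i \<in> M"
  shows "tmap M c f g (\<Sum>i\<in>I. tens (a i) (b i)) = (\<Sum>i\<in>I. c (f (a i)) (g (b i)))"
  unfolding tmap_def
proof (rule the_equality)
  obtain h where h: "bij_betw h {0..<card I} I" using ex_bij_betw_nat_finite[OF fin] by blast
  have e1: "(\<Sum>i\<in>I. tens (a i) (b i)) = (\<Sum>k<card I. tens (a (h k)) (b (h k)))"
    using sum.reindex_bij_betw[OF h, of "\<lambda>i. tens (a i) (b i)"] by (simp add: atLeast0LessThan)
  have e2: "(\<Sum>i\<in>I. c (f (a i)) (g (b i))) = (\<Sum>k<card I. c (f (a (h k))) (g (b (h k))))"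
    using sum.reindex_bij_betw[OF h, of "\<lambda>i. c (f (a i)) (g (b i))"] by (simp add: atLeast0LessThan)
  have "\<forall>k<card I. a (h k) \<in> M \<and> b (h k) \<in> M"
    using h mem by (auto simp: bij_betw_def)
  then show "\<exists>(m::nat) a' b'. (\<forall>k<m. a' k \<in> M \<and> b' k \<in> M) \<and> (\<Sum>i\<in>I. tens (a i) (b i)) = (\<Sum>k<m. tens (a' k) (b' k))
       \<and> (\<Sum>i\<in>I. c (f (a i)) (g (b i))) = (\<Sum>k<m. c (f (a' k)) (g (b' k)))"
    using e1 e2 by (intro exI[of _ "card I"] exI[of _ "\<lambda>k. a (h k)"] exI[of _ "\<lambda>k. b (h k)"]) auto
next
  fix Y assume "\<exists>(m::nat) a' b'. (\<forall>k<m. a' k \<in> M \<and> b' k \<in> M) \<and> (\<Sum>i\<in>I. tens (a i) (b i)) = (\<Sum>k<m. tens (a' k) (b' k))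
       \<and> Y = (\<Sum>k<m. c (f (a' k)) (g (b' k)))"
  then obtain m :: nat and a' b' where m: "\<forall>k<m. a' k \<in> M \<and> b' k \<in> M"
    "(\<Sum>i\<in>I. tens (a i) (b i)) = (\<Sum>k<m. tens (a' k) (b' k))" "Y = (\<Sum>k<m. c (f (a' k)) (g (b' k)))" by blast
  show "Y = (\<Sum>i\<in>I. c (f (a i)) (g (b i)))"
  proof -
    have "(\<Sum>i\<in>I. c (f (a i)) (g (b i))) = (\<Sum>k\<in>{..<m}. c (f (a' k)) (g (b' k)))"
      by (rule bil.core_eq[OF bl fin mem]) (use m(1,2) in auto)
    then show ?thesis using m(3) by simp
  qed
qed


lemma tmap_single:
  fixes c :: "'x \<Rightarrow> 'y \<Rightarrow> 'z::ab_group_add"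
  assumes bl: "bil M M (\<lambda>x y. c (f x) (g y))" and "a \<in> M" "b \<in> M"
  shows "tmap M c f g (tens a b) = c (f a) (g b)"
  using tmap_eq[where c=c and f=f and g=g, OF bl, of "{0::nat}" "\<lambda>_. a" "\<lambda>_. b"] assms by simp


lemma subsp_tsp: assumes "subsp M" shows "subsp (tsp M)"
  unfolding subsp_def
proof (intro conjI ballI allI)
  show "0 \<in> tsp M" unfolding tsp_def mem_Collect_eq by (rule exI[of _ "0::nat"]) simp
next
  fix X Y assume X: "X \<in> tsp M" and Y: "Y \<in> tsp M"
  obtain m :: nat and a b where r1: "\<forall>k<m. a k \<in> M \<and> b k \<in> M" "X = (\<Sum>k<m. tens (a k) (b k))"
    by (rule tsp_E[OF X])
  obtain m' :: nat and a' b' where r2: "\<forall>k<m'. a' k \<in> M \<and> b' k \<in> M" "Y = (\<Sum>k<m'. tens (a' k) (b' k))"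
    by (rule tsp_E[OF Y])
  note r = r1 r2
  define A where "A x = (case x of Inl i \<Rightarrow> a i | Inr j \<Rightarrow> a' j)" for x
  define C where "C x = (case x of Inl i \<Rightarrow> b i | Inr j \<Rightarrow> b' j)" for x
  have "X + Y = (\<Sum>x\<in>{..<m} <+> {..<m'}. tens (A x) (C x))"
    using r by (simp add: sum.Plus A_def C_def o_def)
  moreover have "(\<Sum>x\<in>{..<m} <+> {..<m'}. tens (A x) (C x)) \<in> tsp M"
    by (rule tsp_I) (use r in \<open>auto simp: A_def C_def\<close>)
  ultimately show "X + Y \<in> tsp M" by simp
next
  fix c X assume X: "X \<in> tsp M"
  obtain m :: nat and a b where r: "\<forall>k<m. a k \<in> M \<and> b k \<in> M" "X = (\<Sum>k<m. tens (a k) (b k))" by (rule tsp_E[OF X])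
  have "csmul c X = (\<Sum>k<m. tens (csmul c (a k)) (b k))" using r by (simp add: csmul_sum tens_csmul_left)
  moreover have "\<dots> \<in> tsp M" by (rule tsp_I) (use r assms in \<open>auto intro: subsp_csmul\<close>)
  ultimately show "csmul c X \<in> tsp M" by simp
qed


lemma tmap_lin:
  fixes c :: "'x \<Rightarrow> 'y \<Rightarrow> complex^('p::finite)^('q::finite)"
  assumes bl: "bil M M (\<lambda>x y. c (f x) (g y))"
    and hom: "\<And>\<mu> x y. x\<in>M \<Longrightarrow> y\<in>M \<Longrightarrow> c (f (csmul \<mu> x)) (g y) = csmul \<mu> (c (f x) (g y))"
  shows "lin (tsp M) (tmap M c f g)"
  unfolding lin_def
proof (intro conjI ballI allI)
  fix X Y assume X: "X \<in> tsp M" and Y: "Y \<in> tsp M"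
  obtain m :: nat and a b where r1: "\<forall>k<m. a k \<in> M \<and> b k \<in> M" "X = (\<Sum>k<m. tens (a k) (b k))"
    by (rule tsp_E[OF X])
  obtain m' :: nat and a' b' where r2: "\<forall>k<m'. a' k \<in> M \<and> b' k \<in> M" "Y = (\<Sum>k<m'. tens (a' k) (b' k))"
    by (rule tsp_E[OF Y])
  note r = r1 r2
  define A where "A x = (case x of Inl i \<Rightarrow> a i | Inr j \<Rightarrow> a' j)" for x
  define C where "C x = (case x of Inl i \<Rightarrow> b i | Inr j \<Rightarrow> b' j)" for x
  have e: "X + Y = (\<Sum>x\<in>{..<m} <+> {..<m'}. tens (A x) (C x))"
    using r by (simp add: sum.Plus A_def C_def o_def)
  have "tmap M c f g (X + Y) = (\<Sum>x\<in>{..<m} <+> {..<m'}. c (f (A x)) (g (C x)))"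
    unfolding e by (rule tmap_eq[where c=c and f=f and g=g, OF bl]) (use r in \<open>auto simp: A_def C_def\<close>)
  also have "\<dots> = tmap M c f g X + tmap M c f g Y"
    using r tmap_eq[where c=c and f=f and g=g, OF bl, of "{..<m}" a b] tmap_eq[where c=c and f=f and g=g, OF bl, of "{..<m'}" a' b']
    by (simp add: sum.Plus A_def C_def o_def)
  finally show "tmap M c f g (X + Y) = tmap M c f g X + tmap M c f g Y" .
next
  fix \<mu> X assume X: "X \<in> tsp M"
  obtain m :: nat and a b where r: "\<forall>k<m. a k \<in> M \<and> b k \<in> M" "X = (\<Sum>k<m. tens (a k) (b k))" by (rule tsp_E[OF X])
  have "csmul \<mu> X = (\<Sum>k<m. tens (csmul \<mu> (a k)) (b k))" using r by (simp add: csmul_sum tens_csmul_left)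
  then have "tmap M c f g (csmul \<mu> X) = (\<Sum>k<m. c (f (csmul \<mu> (a k))) (g (b k)))"
    using tmap_eq[where c=c and f=f and g=g, OF bl, of "{..<m}" "\<lambda>k. csmul \<mu> (a k)" b] r bil.sM[OF bl] by (simp add: subsp_csmul)
  also have "\<dots> = csmul \<mu> (tmap M c f g X)"
    using r tmap_eq[where c=c and f=f and g=g, OF bl, of "{..<m}" a b] hom by (simp add: csmul_sum)
  finally show "tmap M c f g (csmul \<mu> X) = csmul \<mu> (tmap M c f g X)" .
qed



lemma lin_comp: "lin M f \<Longrightarrow> (\<And>x. x\<in>M \<Longrightarrow> f x \<in> N) \<Longrightarrow> lin N g \<Longrightarrow> lin M (\<lambda>x. g (f x))"
  unfolding lin_def by (auto intro: subsp_add)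

locale wk =
  fixes M :: "('n::finite) cmat set"
    and \<Delta> :: "'n cmat \<Rightarrow> ('n\<times>'n) cmat"
    and S :: "'n cmat \<Rightarrow> 'n cmat"
    and \<epsilon> :: "'n cmat \<Rightarrow> complex"
  assumes W: "weak_kac M \<Delta> S \<epsilon>"
begin

lemma cs: "cstar_subalg M" using W by (simp add: weak_kac_def)
lemma sM: "subsp M" using cs by (simp add: cstar_subalg_def subsp_def)
lemma oneM: "mat 1 \<in> M" using cs by (simp add: cstar_subalg_def)
lemma multM: "x \<in> M \<Longrightarrow> y \<in> M \<Longrightarrow> x ** y \<in> M" using cs by (simp add: cstar_subalg_def)
lemma adjM: "x \<in> M \<Longrightarrow> adjm x \<in> M" using cs by (simp add: cstar_subalg_def)
lemma Dtsp: "x \<in> M \<Longrightarrow> \<Delta> x \<in> tsp M" using W by (simp add: weak_kac_def)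
lemma Dlin: "lin M \<Delta>" using W by (simp add: weak_kac_def lin_def)
lemma Dmult: "x \<in> M \<Longrightarrow> y \<in> M \<Longrightarrow> \<Delta> (x ** y) = \<Delta> x ** \<Delta> y" using W by (simp add: weak_kac_def)
lemma Dadj: "x \<in> M \<Longrightarrow> \<Delta> (adjm x) = adjm (\<Delta> x)" using W by (simp add: weak_kac_def)
lemma coassoc: "x \<in> M \<Longrightarrow> reassoc (tmap M tens \<Delta> id (\<Delta> x)) = tmap M tens id \<Delta> (\<Delta> x)"
  using W by (simp add: weak_kac_def)
lemma SM: "x \<in> M \<Longrightarrow> S x \<in> M" using W by (auto simp: weak_kac_def bij_betw_def)
lemma Slin: "lin M S" using W by (simp add: weak_kac_def lin_def)
lemma Smult: "x \<in> M \<Longrightarrow> y \<in> M \<Longrightarrow> S (x ** y) = S y ** S x" using W by (simp add: weak_kac_def)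
lemma S1: "S (mat 1) = mat 1" using W by (simp add: weak_kac_def)
lemma SS: "x \<in> M \<Longrightarrow> S (S x) = x" using W by (simp add: weak_kac_def)
lemma SD: "x \<in> M \<Longrightarrow> tmap M tens S S (\<Delta> x) = flip (\<Delta> (S x))" using W by (simp add: weak_kac_def)
lemma eslin: "slin M \<epsilon>" using W by (simp add: weak_kac_def slin_def)
lemma counitL: "x \<in> M \<Longrightarrow> tmap M csmul \<epsilon> id (\<Delta> x) = x" using W by (simp add: weak_kac_def)
lemma A4: "x \<in> M \<Longrightarrow> tmap M tens (eps_s M \<Delta> S) id (\<Delta> x) = tens (mat 1) x ** \<Delta> (mat 1)"
  using W by (simp add: weak_kac_def)

lemma lin_S: "lin M S" by (rule Slin)

lemma bil_SS: "bil M M (\<lambda>x y. tens (S x) (S y))" by (rule bil_tens[OF sM sM Slin Slin])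
lemma bil_Sid: "bil M M (\<lambda>x y. S x ** id y)" by (rule bil_mult[OF sM sM Slin lin_id])
lemma bil_idS: "bil M M (\<lambda>x y. id x ** S y)" by (rule bil_mult[OF sM sM lin_id Slin])
lemma bil_eid: "bil M M (\<lambda>x y. csmul (\<epsilon> x) (id y))" by (rule bil_csmul[OF sM sM eslin lin_id])
lemma subsp_tspM: "subsp (tsp M)" by (rule subsp_tsp[OF sM])

lemma eps_s_lin: "lin M (eps_s M \<Delta> S)"
proof -
  have "lin (tsp M) (tmap M (**) S id)"
    by (rule tmap_lin[where c="(**)" and f=S and g=id, OF bil_Sid]) (simp add: mult_csmul_left linD(2)[OF Slin])
  then show ?thesis using Dlin Dtsp unfolding eps_s_def[abs_def] lin_def by auto
qed
lemma eps_t_lin: "lin M (eps_t M \<Delta> S)"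
proof -
  have "lin (tsp M) (tmap M (**) id S)"
    by (rule tmap_lin[where c="(**)" and f=id and g=S, OF bil_idS]) (simp add: mult_csmul_left)
  then show ?thesis using Dlin Dtsp unfolding eps_t_def[abs_def] lin_def by auto
qed

lemma eps_s_rep: assumes "\<forall>k<(m::nat). a k \<in> M \<and> b k \<in> M" "\<Delta> x = (\<Sum>k<m. tens (a k) (b k))"
  shows "eps_s M \<Delta> S x = (\<Sum>k<m. S (a k) ** b k)"
  unfolding eps_s_def assms(2) using tmap_eq[where c="(**)" and f=S and g=id, OF bil_Sid, of "{..<m}" a b] assms(1) by simp
lemma eps_t_rep: assumes "\<forall>k<(m::nat). a k \<in> M \<and> b k \<in> M" "\<Delta> x = (\<Sum>k<m. tens (a k) (b k))"
  shows "eps_t M \<Delta> S x = (\<Sum>k<m. a k ** S (b k))"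
  unfolding eps_t_def assms(2) using tmap_eq[where c="(**)" and f=id and g=S, OF bil_idS, of "{..<m}" a b] assms(1) by simp

lemma eps_sM: assumes "x \<in> M" shows "eps_s M \<Delta> S x \<in> M"
proof -
  obtain m :: nat and a b where r: "\<forall>k<m. a k \<in> M \<and> b k \<in> M" "\<Delta> x = (\<Sum>k<m. tens (a k) (b k))"
    by (rule tsp_E[OF Dtsp[OF assms]])
  show ?thesis unfolding eps_s_rep[OF r] by (rule subsp_sum[OF sM]) (use r in \<open>auto intro: multM SM\<close>)
qed
lemma eps_tM: assumes "x \<in> M" shows "eps_t M \<Delta> S x \<in> M"
proof -
  obtain m :: nat and a b where r: "\<forall>k<m. a k \<in> M \<and> b k \<in> M" "\<Delta> x = (\<Sum>k<m. tens (a k) (b k))"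
    by (rule tsp_E[OF Dtsp[OF assms]])
  show ?thesis unfolding eps_t_rep[OF r] by (rule subsp_sum[OF sM]) (use r in \<open>auto intro: multM SM\<close>)
qed

lemma DS_rep: assumes r: "\<forall>k<(m::nat). a k \<in> M \<and> b k \<in> M" "\<Delta> x = (\<Sum>k<m. tens (a k) (b k))" and x: "x \<in> M"
  shows "\<Delta> (S x) = (\<Sum>k<m. tens (S (b k)) (S (a k)))"
proof -
  have "flip (\<Delta> (S x)) = (\<Sum>k<m. tens (S (a k)) (S (b k)))"
    using SD[OF x] tmap_eq[where c=tens and f=S and g=S, OF bil_SS, of "{..<m}" a b] r by simp
  then have "flip (flip (\<Delta> (S x))) = (\<Sum>k<m. tens (S (b k)) (S (a k)))"
    by (simp add: flip_sum flip_tens)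
  then show ?thesis by (simp add: flip_flip)
qed

lemma S_eps_s_S: assumes x: "x \<in> M" shows "S (eps_s M \<Delta> S (S x)) = eps_t M \<Delta> S x"
proof -
  obtain m :: nat and a b where r: "\<forall>k<m. a k \<in> M \<and> b k \<in> M" "\<Delta> x = (\<Sum>k<m. tens (a k) (b k))"
    by (rule tsp_E[OF Dtsp[OF x]])
  have r2: "\<forall>k<m. S (b k) \<in> M \<and> S (a k) \<in> M" using r SM by auto
  have "eps_s M \<Delta> S (S x) = (\<Sum>k<m. S (S (b k)) ** S (a k))"
    by (rule eps_s_rep[OF r2 DS_rep[OF r x]])
  also have "\<dots> = (\<Sum>k<m. b k ** S (a k))" using r SS by simp
  finally have "S (eps_s M \<Delta> S (S x)) = S (\<Sum>k<m. b k ** S (a k))" by simp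
  also have "\<dots> = (\<Sum>k<m. S (b k ** S (a k)))"
    by (rule lin_sum[OF Slin sM]) (use r in \<open>auto intro: multM SM\<close>)
  also have "\<dots> = (\<Sum>k<m. a k ** S (b k))" using r by (simp add: Smult SM SS)
  also have "\<dots> = eps_t M \<Delta> S x" by (rule eps_t_rep[OF r, symmetric])
  finally show ?thesis .
qed


abbreviation "es \<equiv> eps_s M \<Delta> S"
abbreviation "et \<equiv> eps_t M \<Delta> S"

lemma bil_esid: "bil M M (\<lambda>x y. tens (es x) (id y))" by (rule bil_tens[OF sM sM eps_s_lin lin_id])
lemma bil_idet: "bil M M (\<lambda>x y. tens (id x) (et y))" by (rule bil_tens[OF sM sM lin_id eps_t_lin])
lemma bil_swap: "bil M M (\<lambda>x y. tens (S y) (S x))" by (rule bil_tens_swap[OF sM Slin])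

lemma e_rep: obtains m0 :: nat and p q where "\<forall>k<m0. p k \<in> M \<and> q k \<in> M" "\<Delta> (mat 1) = (\<Sum>k<m0. tens (p k) (q k))"
  by (rule tsp_E[OF Dtsp[OF oneM]])

lemma B_eq: assumes x: "x \<in> M" shows "tmap M tens id et (\<Delta> x) = \<Delta> (mat 1) ** tens x (mat 1)"
proof -
  obtain m :: nat and a b where r: "\<forall>k<m. a k \<in> M \<and> b k \<in> M" "\<Delta> x = (\<Sum>k<m. tens (a k) (b k))"
    by (rule tsp_E[OF Dtsp[OF x]])
  obtain m0 :: nat and p q where e: "\<forall>k<m0. p k \<in> M \<and> q k \<in> M" "\<Delta> (mat 1) = (\<Sum>k<m0. tens (p k) (q k))"
    by (rule e_rep)
  have Sx: "S x \<in> M" using SM x by simp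
  have r2: "\<forall>k<m. S (b k) \<in> M \<and> S (a k) \<in> M" using r SM by auto
  have "tmap M tens es id (\<Delta> (S x)) = (\<Sum>k<m. tens (es (S (b k))) (id (S (a k))))"
    unfolding DS_rep[OF r x] by (rule tmap_eq[where c=tens and f=es and g=id, OF bil_esid]) (use r2 in auto)
  moreover have "tmap M tens es id (\<Delta> (S x)) = (\<Sum>k<m0. tens (p k) (S x ** q k))"
    unfolding A4[OF Sx] e(2) by (simp add: mult_sum_right tens_mult)
  ultimately have E1: "(\<Sum>k<m. tens (es (S (b k))) (S (a k))) = (\<Sum>k<m0. tens (p k) (S x ** q k))" by simp
  have "(\<Sum>k\<in>{..<m}. tens (S (S (a k))) (S (es (S (b k))))) = (\<Sum>k\<in>{..<m0}. tens (S (S x ** q k)) (S (p k)))"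
    by (rule bil.core_eq[OF bil_swap]) (use r2 e Sx E1 in \<open>auto intro: eps_sM multM\<close>)
  moreover have "(\<Sum>k\<in>{..<m}. tens (S (S (a k))) (S (es (S (b k))))) = (\<Sum>k<m. tens (a k) (et (b k)))"
    using r by (simp add: SS S_eps_s_S)
  moreover have "(\<Sum>k\<in>{..<m0}. tens (S (S x ** q k)) (S (p k))) = (\<Sum>k<m0. tens (S (q k)) (S (p k))) ** tens x (mat 1)"
    using e x by (simp add: Smult SS SM mult_sum_left tens_mult)
  moreover have "(\<Sum>k<m0. tens (S (q k)) (S (p k))) = \<Delta> (mat 1)"
    using DS_rep[OF e oneM] by (simp add: S1)
  moreover have "tmap M tens id et (\<Delta> x) = (\<Sum>k<m. tens (id (a k)) (et (b k)))"
    unfolding r(2) by (rule tmap_eq[where c=tens and f=id and g=et, OF bil_idet]) (use r in auto)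
  ultimately show ?thesis by simp
qed

lemma et_one: "et (mat 1) = mat 1"
proof -
  obtain m0 :: nat and p q where e: "\<forall>k<m0. p k \<in> M \<and> q k \<in> M" "\<Delta> (mat 1) = (\<Sum>k<m0. tens (p k) (q k))"
    by (rule e_rep)
  have "tmap M tens id et (\<Delta> (mat 1)) = (\<Sum>k<m0. tens (id (p k)) (et (q k)))"
    unfolding e(2) by (rule tmap_eq[where c=tens and f=id and g=et, OF bil_idet]) (use e in auto)
  then have E: "(\<Sum>k<m0. tens (p k) (et (q k))) = (\<Sum>k<m0. tens (p k) (q k))"
    using B_eq[OF oneM] e(2) by (simp add: tens_one)
  have "(\<Sum>k\<in>{..<m0}. csmul (\<epsilon> (p k)) (id (et (q k)))) = (\<Sum>k\<in>{..<m0}. csmul (\<epsilon> (p k)) (id (q k)))"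
    by (rule bil.core_eq[OF bil_eid]) (use e E in \<open>auto intro: eps_tM\<close>)
  moreover have "(\<Sum>k\<in>{..<m0}. csmul (\<epsilon> (p k)) (id (q k))) = mat 1"
    using counitL[OF oneM] tmap_eq[where c=csmul and f=\<epsilon> and g=id, OF bil_eid, of "{..<m0}" p q] e by simp
  moreover have "et (\<Sum>k\<in>{..<m0}. csmul (\<epsilon> (p k)) (q k)) = (\<Sum>k\<in>{..<m0}. csmul (\<epsilon> (p k)) (et (q k)))"
    by (rule lin_lincomb[OF eps_t_lin sM]) (use e in auto)
  ultimately show ?thesis by simp
qed

lemma et_formula:
  assumes y: "y \<in> M" and e: "\<forall>k<m0. p k \<in> M \<and> q k \<in> M" "\<Delta> (mat 1) = (\<Sum>k<(m0::nat). tens (p k) (q k))"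
  shows "et y = (\<Sum>k<m0. csmul (\<epsilon> (p k ** y)) (q k))"
proof -
  obtain m :: nat and a b where r: "\<forall>k<m. a k \<in> M \<and> b k \<in> M" "\<Delta> y = (\<Sum>k<m. tens (a k) (b k))"
    by (rule tsp_E[OF Dtsp[OF y]])
  have "tmap M tens id et (\<Delta> y) = (\<Sum>k<m. tens (id (a k)) (et (b k)))"
    unfolding r(2) by (rule tmap_eq[where c=tens and f=id and g=et, OF bil_idet]) (use r in auto)
  then have E: "(\<Sum>k<m. tens (a k) (et (b k))) = (\<Sum>k<m0. tens (p k ** y) (q k))"
    using B_eq[OF y] e(2) by (simp add: mult_sum_left tens_mult)
  have "(\<Sum>k\<in>{..<m}. csmul (\<epsilon> (a k)) (id (et (b k)))) = (\<Sum>k\<in>{..<m0}. csmul (\<epsilon> (p k ** y)) (id (q k)))"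
    by (rule bil.core_eq[OF bil_eid]) (use e E r y in \<open>auto intro: eps_tM multM\<close>)
  moreover have "(\<Sum>k\<in>{..<m}. csmul (\<epsilon> (a k)) (id (b k))) = y"
    using counitL[OF y] tmap_eq[where c=csmul and f=\<epsilon> and g=id, OF bil_eid, of "{..<m}" a b] r by simp
  moreover have "et (\<Sum>k\<in>{..<m}. csmul (\<epsilon> (a k)) (b k)) = (\<Sum>k\<in>{..<m}. csmul (\<epsilon> (a k)) (et (b k)))"
    by (rule lin_lincomb[OF eps_t_lin sM]) (use r in auto)
  ultimately show ?thesis by simp
qed

lemma tsp_single: "a \<in> M \<Longrightarrow> b \<in> M \<Longrightarrow> tens a b \<in> tsp M"
  using tsp_I[of "{0::nat}" "\<lambda>_. a" M "\<lambda>_. b"] by simp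

lemma bil_Did: "bil M M (\<lambda>x y. tens (\<Delta> x) (id y))" by (rule bil_tens[OF sM sM Dlin lin_id])
lemma bil_idD: "bil M M (\<lambda>x y. tens (id x) (\<Delta> y))" by (rule bil_tens[OF sM sM lin_id Dlin])
lemma bil_idD': "bil M M (\<lambda>x y. tens x (\<Delta> y))" using bil_tens[OF sM sM lin_id' Dlin] by simp

lemma T_lin: "lin (tsp M) (tmap M tens id et)"
  by (rule tmap_lin[where c=tens and f=id and g=et, OF bil_idet]) (simp add: tens_csmul_left)
lemma bil_T: "bil M (tsp M) (\<lambda>x y. tens x (tmap M tens id et y))"
  using bil_tens[OF sM subsp_tspM lin_id' T_lin] by simp

lemma Eq3:
  assumes e: "\<forall>k<m0. p k \<in> M \<and> q k \<in> M" "\<Delta> (mat 1) = (\<Sum>k<(m0::nat). tens (p k) (q k))"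
  shows "(\<Sum>k<m0. tens (p k) (\<Delta> (q k))) = (\<Sum>k<m0. tens (p k) (\<Delta> (mat 1) ** tens (q k) (mat 1)))"
proof -
  define X where "X = (\<Sum>k<m0. tens (p k) (\<Delta> (q k)))"
  have tD1: "tmap M tens \<Delta> id (\<Delta> (mat 1)) = (\<Sum>k<m0. tens (\<Delta> (p k)) (id (q k)))"
    unfolding e(2) by (rule tmap_eq[where c=tens and f=\<Delta> and g=id, OF bil_Did]) (use e in auto)
  have tD2: "tmap M tens id \<Delta> (\<Delta> (mat 1)) = (\<Sum>k<m0. tens (id (p k)) (\<Delta> (q k)))"
    unfolding e(2) by (rule tmap_eq[where c=tens and f=id and g=\<Delta>, OF bil_idD]) (use e in auto)
  have X1: "X = reassoc (\<Sum>k<m0. tens (\<Delta> (p k)) (q k))"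
    using coassoc[OF oneM] tD1 tD2 by (simp add: X_def)
  have "\<forall>k. \<exists>r::nat \<times> (nat \<Rightarrow> 'n cmat) \<times> (nat \<Rightarrow> 'n cmat). k < m0 \<longrightarrow> (\<forall>l<fst r. fst (snd r) l \<in> M \<and> snd (snd r) l \<in> M)
           \<and> \<Delta> (p k) = (\<Sum>l<fst r. tens (fst (snd r) l) (snd (snd r) l))"
  proof
    fix k
    show "\<exists>r::nat \<times> (nat \<Rightarrow> 'n cmat) \<times> (nat \<Rightarrow> 'n cmat). k < m0 \<longrightarrow> (\<forall>l<fst r. fst (snd r) l \<in> M \<and> snd (snd r) l \<in> M)
           \<and> \<Delta> (p k) = (\<Sum>l<fst r. tens (fst (snd r) l) (snd (snd r) l))"
    proof (cases "k < m0")
      case True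
      then have "p k \<in> M" using e by auto
      then obtain m1 :: nat and a b where "\<forall>l<m1. a l \<in> M \<and> b l \<in> M" "\<Delta> (p k) = (\<Sum>l<m1. tens (a l) (b l))"
        by (rule tsp_E[OF Dtsp])
      then show ?thesis by (intro exI[of _ "(m1, a, b)"]) simp
    qed simp
  qed
  then obtain R :: "nat \<Rightarrow> nat \<times> (nat \<Rightarrow> 'n cmat) \<times> (nat \<Rightarrow> 'n cmat)" where R: "\<forall>k. k < m0 \<longrightarrow> (\<forall>l<fst (R k). fst (snd (R k)) l \<in> M \<and> snd (snd (R k)) l \<in> M)
           \<and> \<Delta> (p k) = (\<Sum>l<fst (R k). tens (fst (snd (R k)) l) (snd (snd (R k)) l))"
    by (rule choice[THEN exE]) blast
  define mm where "mm k = fst (R k)" for k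
  define c where "c k = fst (snd (R k))" for k
  define d where "d k = snd (snd (R k))" for k
  have R': "\<And>k. k < m0 \<Longrightarrow> (\<forall>l<mm k. c k l \<in> M \<and> d k l \<in> M) \<and> \<Delta> (p k) = (\<Sum>l<mm k. tens (c k l) (d k l))"
    using R by (simp add: mm_def c_def d_def)
  define SG where "SG = Sigma {..<m0} (\<lambda>k. {..<mm k})"
  have finSG: "finite SG" by (simp add: SG_def)
  have expand: "reassoc (\<Sum>k<m0. tens (\<Delta> (p k)) (r k)) =
      (\<Sum>j\<in>SG. tens (c (fst j) (snd j)) (tens (d (fst j) (snd j)) (r (fst j))))" for r
  proof -
    have "reassoc (\<Sum>k<m0. tens (\<Delta> (p k)) (r k)) = (\<Sum>k<m0. \<Sum>l<mm k. tens (c k l) (tens (d k l) (r k)))"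
      unfolding reassoc_sum
    proof (rule sum.cong[OF refl])
      fix k assume "k \<in> {..<m0}"
      then have "\<Delta> (p k) = (\<Sum>l<mm k. tens (c k l) (d k l))" using R' by simp
      then show "reassoc (tens (\<Delta> (p k)) (r k)) = (\<Sum>l<mm k. tens (c k l) (tens (d k l) (r k)))"
        by (simp add: tens_sum_left reassoc_sum reassoc_tens)
    qed
    also have "\<dots> = (\<Sum>(k,l)\<in>SG. tens (c k l) (tens (d k l) (r k)))"
      unfolding SG_def by (rule sum.Sigma) auto
    also have "\<dots> = (\<Sum>j\<in>SG. tens (c (fst j) (snd j)) (tens (d (fst j) (snd j)) (r (fst j))))"
      by (simp add: case_prod_beta)
    finally show ?thesis .
  qed
  have memSG: "\<forall>j\<in>SG. c (fst j) (snd j) \<in> M \<and> d (fst j) (snd j) \<in> M \<and> fst j < m0"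
    using R' by (auto simp: SG_def)
  have X2: "X = (\<Sum>j\<in>SG. tens (c (fst j) (snd j)) (tens (d (fst j) (snd j)) (q (fst j))))"
    using X1 expand[of q] by simp
  have "(\<Sum>k\<in>{..<m0}. tens (p k) (tmap M tens id et (\<Delta> (q k))))
      = (\<Sum>j\<in>SG. tens (c (fst j) (snd j)) (tmap M tens id et (tens (d (fst j) (snd j)) (q (fst j)))))"
  proof (rule bil.core_eq[OF bil_T])
    show "finite {..<m0}" by simp
    show "finite SG" by (rule finSG)
    show "\<forall>i\<in>{..<m0}. p i \<in> M \<and> \<Delta> (q i) \<in> tsp M" using e by (auto intro: Dtsp)
    show "\<forall>j\<in>SG. c (fst j) (snd j) \<in> M \<and> tens (d (fst j) (snd j)) (q (fst j)) \<in> tsp M"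
      using memSG e by (auto intro: tsp_single)
    show "(\<Sum>i\<in>{..<m0}. tens (p i) (\<Delta> (q i))) = (\<Sum>j\<in>SG. tens (c (fst j) (snd j)) (tens (d (fst j) (snd j)) (q (fst j))))"
      using X2 by (simp add: X_def)
  qed
  note F1 = this
  have F2: "(\<Sum>k\<in>{..<m0}. tens (p k) (tmap M tens id et (\<Delta> (q k)))) = (\<Sum>k<m0. tens (p k) (\<Delta> (mat 1) ** tens (q k) (mat 1)))"
    using e by (simp add: B_eq)
  have F3: "(\<Sum>j\<in>SG. tens (c (fst j) (snd j)) (tmap M tens id et (tens (d (fst j) (snd j)) (q (fst j)))))
      = (\<Sum>j\<in>SG. tens (c (fst j) (snd j)) (tens (d (fst j) (snd j)) (et (q (fst j)))))"
  proof (rule sum.cong[OF refl])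
    fix j assume "j \<in> SG"
    then have "d (fst j) (snd j) \<in> M" "q (fst j) \<in> M" using memSG e by auto
    then show "tens (c (fst j) (snd j)) (tmap M tens id et (tens (d (fst j) (snd j)) (q (fst j))))
      = tens (c (fst j) (snd j)) (tens (d (fst j) (snd j)) (et (q (fst j))))"
      using tmap_single[where c=tens and f=id and g=et, OF bil_idet] by simp
  qed
  have F4: "(\<Sum>j\<in>SG. tens (c (fst j) (snd j)) (tens (d (fst j) (snd j)) (et (q (fst j)))))
      = reassoc (\<Sum>k<m0. tens (\<Delta> (p k)) (et (q k)))"
    using expand[of "\<lambda>k. et (q k)"] by simp
  have F5: "(\<Sum>k<m0. tens (\<Delta> (p k)) (et (q k))) = (\<Sum>k<m0. tens (\<Delta> (p k)) (q k))"
  proof -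
    have E: "(\<Sum>k<m0. tens (p k) (et (q k))) = \<Delta> (mat 1)"
      using B_eq[OF oneM] tmap_eq[where c=tens and f=id and g=et, OF bil_idet, of "{..<m0}" p q] e
      by (simp add: tens_one)
    have "tmap M tens \<Delta> id (\<Sum>k<m0. tens (p k) (et (q k))) = (\<Sum>k<m0. tens (\<Delta> (p k)) (id (et (q k))))"
      by (rule tmap_eq[where c=tens and f=\<Delta> and g=id, OF bil_Did]) (use e in \<open>auto intro: eps_tM\<close>)
    then show ?thesis using E tD1 by simp
  qed
  have "(\<Sum>k<m0. tens (p k) (\<Delta> (mat 1) ** tens (q k) (mat 1))) = X"
    unfolding F2[symmetric] F1 F3 F4 F5 X1 ..
  then show ?thesis by (simp add: X_def)
qed


end

context wk begin
lemma adj_e: "adjm (\<Delta> (mat 1)) = \<Delta> (mat 1)"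
  using Dadj[OF oneM] by (simp add: adjm_one)

lemma lin_re: "lin M (\<lambda>y. tens y (mat 1) ** \<Delta> (mat 1))"
  unfolding lin_def by (simp add: tens_add_left matrix_add_rdistrib' tens_csmul_left mult_csmul_left)

lemma Eq5:
  assumes e: "\<forall>k<m0. p k \<in> M \<and> q k \<in> M" "\<Delta> (mat 1) = (\<Sum>k<(m0::nat). tens (p k) (q k))"
  shows "(\<Sum>k<m0. tens (p k) (\<Delta> (q k))) = (\<Sum>k<m0. tens (p k) (tens (q k) (mat 1) ** \<Delta> (mat 1)))"
proof -
  define X where "X = (\<Sum>k<m0. tens (p k) (\<Delta> (q k)))"
  have "adjm (\<Sum>k<m0. tens (p k) (q k)) = (\<Sum>k<m0. tens (adjm (p k)) (adjm (q k)))"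
    unfolding adjm_sum adjm_tens ..
  then have ea: "\<Delta> (mat 1) = (\<Sum>k<m0. tens (adjm (p k)) (adjm (q k)))"
    using adj_e e(2) by simp
  have bl2: "bil M M (\<lambda>x y. tens x (tens y (mat 1) ** \<Delta> (mat 1)))"
    using bil_tens[OF sM sM lin_id' lin_re] by simp
  have ma: "\<forall>k<m0. adjm (p k) \<in> M \<and> adjm (q k) \<in> M" using e adjM by auto
  have "(\<Sum>k\<in>{..<m0}. tens (p k) (\<Delta> (q k))) = (\<Sum>k\<in>{..<m0}. tens (adjm (p k)) (\<Delta> (adjm (q k))))"
    by (rule bil.core_eq[OF bil_idD']) (use e ea ma in auto)
  also have "\<dots> = adjm X"
    unfolding X_def adjm_sum adjm_tens using e by (simp add: Dadj)
  finally have X1: "X = adjm X" by (simp add: X_def)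
  have "adjm X = (\<Sum>k<m0. tens (adjm (p k)) (tens (adjm (q k)) (mat 1) ** \<Delta> (mat 1)))"
    unfolding X_def Eq3[OF e] adjm_sum adjm_tens adjm_mult adj_e adjm_one ..
  also have "\<dots> = (\<Sum>k<m0. tens (p k) (tens (q k) (mat 1) ** \<Delta> (mat 1)))"
  proof -
    have "(\<Sum>k\<in>{..<m0}. tens (adjm (p k)) (tens (adjm (q k)) (mat 1) ** \<Delta> (mat 1)))
        = (\<Sum>k\<in>{..<m0}. tens (p k) (tens (q k) (mat 1) ** \<Delta> (mat 1)))"
      by (rule bil.core_eq[OF bl2]) (use e ea ma in auto)
    then show ?thesis by simp
  qed
  finally show ?thesis using X1 by (simp add: X_def)
qed

lemma slin_ry: "y \<in> M \<Longrightarrow> slin M (\<lambda>u. \<epsilon> (u ** y))"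
  unfolding slin_def using eslin multM
  by (simp add: matrix_add_rdistrib' mult_csmul_left slinD)

lemma Nt_main: assumes y: "y \<in> M"
  shows "\<Delta> (et y) = \<Delta> (mat 1) ** tens (et y) (mat 1) \<and> \<Delta> (et y) = tens (et y) (mat 1) ** \<Delta> (mat 1)"
proof -
  obtain m0 :: nat and p q where e: "\<forall>k<m0. p k \<in> M \<and> q k \<in> M" "\<Delta> (mat 1) = (\<Sum>k<m0. tens (p k) (q k))"
    by (rule e_rep)
  have bl: "bil M UNIV (\<lambda>u Z. csmul (\<epsilon> (u ** y)) Z)"
    using bil_csmul[OF sM subsp_UNIV slin_ry[OF y] lin_id'] by simp
  have etf: "et y = (\<Sum>k<m0. csmul (\<epsilon> (p k ** y)) (q k))" by (rule et_formula[OF y e])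
  have D: "\<Delta> (et y) = (\<Sum>k<m0. csmul (\<epsilon> (p k ** y)) (\<Delta> (q k)))"
    unfolding etf by (rule lin_lincomb[OF Dlin sM]) (use e in auto)
  have pM: "\<forall>k\<in>{..<m0}. p k \<in> M \<and> (\<Delta> (q k)) \<in> (UNIV :: ('n\<times>'n) cmat set)" using e by auto
  have pM2: "\<forall>k\<in>{..<m0}. p k \<in> M \<and> Z k \<in> (UNIV :: ('n\<times>'n) cmat set)" for Z using e by auto
  have "(\<Sum>k\<in>{..<m0}. csmul (\<epsilon> (p k ** y)) (\<Delta> (q k)))
     = (\<Sum>k\<in>{..<m0}. csmul (\<epsilon> (p k ** y)) (\<Delta> (mat 1) ** tens (q k) (mat 1)))"
    by (rule bil.core_eq[OF bl finite_lessThan pM finite_lessThan pM2 Eq3[OF e]])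
  also have "\<dots> = \<Delta> (mat 1) ** tens (et y) (mat 1)"
    unfolding etf tens_sum_left mult_sum_right tens_csmul_left mult_csmul_right ..
  finally have 1: "\<Delta> (et y) = \<Delta> (mat 1) ** tens (et y) (mat 1)" unfolding D .
  have "(\<Sum>k\<in>{..<m0}. csmul (\<epsilon> (p k ** y)) (\<Delta> (q k)))
     = (\<Sum>k\<in>{..<m0}. csmul (\<epsilon> (p k ** y)) (tens (q k) (mat 1) ** \<Delta> (mat 1)))"
    by (rule bil.core_eq[OF bl finite_lessThan pM finite_lessThan pM2 Eq5[OF e]])
  also have "\<dots> = tens (et y) (mat 1) ** \<Delta> (mat 1)"
    unfolding etf tens_sum_left mult_sum_left tens_csmul_left mult_csmul_left ..
  finally have 2: "\<Delta> (et y) = tens (et y) (mat 1) ** \<Delta> (mat 1)" unfolding D .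
  show ?thesis using 1 2 by (rule conjI)
qed

end

theorem corollary2p1p9:
  fixes M :: "('n::finite) cmat set"
    and \<Delta> :: "'n cmat \<Rightarrow> ('n\<times>'n) cmat"
    and S :: "'n cmat \<Rightarrow> 'n cmat"
    and \<epsilon> :: "'n cmat \<Rightarrow> complex"
  assumes "weak_kac M \<Delta> S \<epsilon>"
  shows "eps_t M \<Delta> S (mat 1) = mat 1
    \<and> (\<forall>x\<in>M. eps_t M \<Delta> S x \<in> Nt M \<Delta>)
    \<and> (\<forall>x\<in>Ns M \<Delta>. tmap M tens id (eps_t M \<Delta> S) (\<Delta> x) = \<Delta> (mat 1) ** tens x (mat 1))"
proof -
  interpret wk M \<Delta> S \<epsilon> by (rule wk.intro[OF assms])
  show ?thesis
  proof (intro conjI ballI)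
    show "eps_t M \<Delta> S (mat 1) = mat 1" by (rule et_one)
  next
    fix x assume x: "x \<in> M"
    show "eps_t M \<Delta> S x \<in> Nt M \<Delta>"
      using eps_tM[OF x] Nt_main[OF x] unfolding Nt_def mem_Collect_eq by blast
  next
    fix x assume "x \<in> Ns M \<Delta>"
    then have x: "x \<in> M" unfolding Ns_def by blast
    show "tmap M tens id (eps_t M \<Delta> S) (\<Delta> x) = \<Delta> (mat 1) ** tens x (mat 1)" by (rule B_eq[OF x])
  qed
qed

end
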